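(* Let $A$ be a commutative ring and $\sigma$ a hereditary torsion theory on $A$-modules such that $A$ is $\sigma$-artinian. Then $\mathcal{K}(\sigma)$ is a finite set.
   Context: $\mathcal{L}(\sigma)$ is the Gabriel filter of $\sigma$. $A$ is $\sigma$-artinian if for every descending chain of ideals $\mathfrak{a}_1\supseteq\mathfrak{a}_2\supseteq\cdots$ there is an index $m$ such that for every $s\ge m$ the module $\mathfrak{a}_m/\mathfrak{a}_s$ is $\sigma$-torsion (i.e. for each $x\in\mathfrak{a}_m$ there is $\mathfrak{h}\in\mathcal{L}(\sigma)$ with $x\mathfrak{h}\subseteq\mathfrak{a}_s$). $\mathcal{K}(\sigma)$ is the set of prime ideals $\mathfrak{p}$ of $A$ with $\mathfrak{p}\notin\mathcal{L}(\sigma)$. *)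

theory Defs
  imports "HOL-Algebra.Algebra"
begin

definition colon_ideal :: "('a, 'b) ring_scheme \<Rightarrow> 'a set \<Rightarrow> 'a \<Rightarrow> 'a set" where
  "colon_ideal R I a = {x \<in> carrier R. a \<otimes>\<^bsub>R\<^esub> x \<in> I}"

text \<open>Hereditary torsion theories sigma on R-modules correspond bijectively to such filters
  L(sigma); we represent sigma by its Gabriel filter.\<close>
definition gabriel_filter :: "('a, 'b) ring_scheme \<Rightarrow> 'a set set \<Rightarrow> bool" where
  "gabriel_filter R F \<longleftrightarrow>
     (\<forall>I\<in>F. ideal I R) \<and>
     carrier R \<in> F \<and>
     (\<forall>I J. I \<in> F \<and> ideal J R \<and> I \<subseteq> J \<longrightarrow> J \<in> F) \<and>
     (\<forall>I\<in>F. \<forall>a\<in>carrier R. colon_ideal R I a \<in> F) \<and>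
     (\<forall>I J. I \<in> F \<and> ideal J R \<and> (\<forall>a\<in>I. colon_ideal R J a \<in> F) \<longrightarrow> J \<in> F)"

definition sigma_artinian :: "('a, 'b) ring_scheme \<Rightarrow> 'a set set \<Rightarrow> bool" where
  "sigma_artinian R F \<longleftrightarrow>
     (\<forall>\<aa> :: nat \<Rightarrow> 'a set.
        (\<forall>n. ideal (\<aa> n) R) \<and> (\<forall>n. \<aa> (Suc n) \<subseteq> \<aa> n) \<longrightarrow>
        (\<exists>m. \<forall>s\<ge>m. \<forall>x\<in>\<aa> m. \<exists>h\<in>F. \<forall>y\<in>h. x \<otimes>\<^bsub>R\<^esub> y \<in> \<aa> s))"

definition K_sigma :: "('a, 'b) ring_scheme \<Rightarrow> 'a set set \<Rightarrow> 'a set set" where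
  "K_sigma R F = {p. primeideal p R \<and> p \<notin> F}"

end

theory Submission
  imports Defs
begin

lemma gf_ideal: assumes "gabriel_filter R F" "I \<in> F" shows "ideal I R"
  using bspec[OF conjunct1[OF assms(1)[unfolded gabriel_filter_def]] assms(2)] .

lemma gf_up: assumes "gabriel_filter R F" "I \<in> F" "ideal J R" "I \<subseteq> J" shows "J \<in> F"
proof -
  have "\<forall>I J. I \<in> F \<and> ideal J R \<and> I \<subseteq> J \<longrightarrow> J \<in> F"
    by (rule conjunct1[OF conjunct2[OF conjunct2[OF assms(1)[unfolded gabriel_filter_def]]]])
  thus ?thesis using assms(2-4) by blast
qed

lemma gf_avoid:
  assumes "gabriel_filter R F" "h \<in> F" "primeideal p R" "p \<notin> F"
  shows "\<exists>y\<in>h. y \<notin> p"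
proof (rule ccontr)
  assume "\<not> ?thesis"
  hence "h \<subseteq> p" by blast
  moreover have "ideal p R" using assms(3) by (rule primeideal.axioms(1))
  ultimately have "p \<in> F" using gf_up[OF assms(1,2)] by blast
  thus False using assms(4) by blast
qed

lemma prime_pow:
  fixes R (structure)
  assumes "primeideal p R" "x \<in> carrier R" "x [^]\<^bsub>R\<^esub> (n::nat) \<in> p" "n > 0"
  shows "x \<in> p"
  using assms(3,4)
proof (induction n)
  case 0 then show ?case by simp
next
  case (Suc n)
  interpret primeideal p R by fact
  show ?case
  proof (cases "n = 0")
    case True then show ?thesis using Suc.prems assms(2) by simp
  next
    case False
    have "x [^] n \<otimes> x \<in> p" using Suc.prems by simp
    hence "x [^] n \<in> p \<or> x \<in> p" using I_prime assms(2) by simp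
    thus ?thesis using Suc.IH False by blast
  qed
qed

lemma incomparable:
  fixes R (structure)
  assumes cr: "cring R" and gf: "gabriel_filter R F" and sa: "sigma_artinian R F"
    and p: "primeideal p R" "p \<notin> F" and q: "primeideal q R" "q \<notin> F"
    and sub: "p \<subseteq> q"
  shows "p = q"
proof (rule ccontr)
  assume "p \<noteq> q"
  then obtain x where x: "x \<in> q" "x \<notin> p" using sub by blast
  interpret cring R by fact
  interpret P: primeideal p R by fact
  interpret Q: primeideal q R by fact
  have xc: "x \<in> carrier R" using x Q.Icarr by blast
  define a where "a n = set_add R (PIdl (x [^] (n::nat))) p" for n
  have aid: "ideal (a n) R" for n
    unfolding a_def by (rule add_ideals) (auto intro: cgenideal_ideal xc P.is_ideal)
  have amem: "y \<in> a n \<longleftrightarrow> (\<exists>r\<in>carrier R. \<exists>t\<in>p. y = r \<otimes> x [^] n \<oplus> t)" for y n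
    unfolding a_def set_add_def' cgenideal_def by blast
  have adec: "a (Suc n) \<subseteq> a n" for n
  proof
    fix y assume "y \<in> a (Suc n)"
    then obtain r t where rt: "r \<in> carrier R" "t \<in> p" "y = r \<otimes> x [^] Suc n \<oplus> t"
      unfolding amem by blast
    have "y = (r \<otimes> x) \<otimes> x [^] n \<oplus> t" using rt xc
      by (simp add: m_assoc m_comm)
    thus "y \<in> a n" unfolding amem using rt xc by blast
  qed
  obtain m where m: "\<forall>s\<ge>m. \<forall>y\<in>a m. \<exists>h\<in>F. \<forall>z\<in>h. y \<otimes> z \<in> a s"
    using mp[OF spec[OF sa[unfolded sigma_artinian_def], of a] conjI[OF allI[OF aid] allI[OF adec]]] by (elim exE)
  have "x [^] m \<in> a m"
  proof -
    have "x [^] m = \<one> \<otimes> x [^] m \<oplus> \<zero>" using xc by simp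
    hence "\<exists>t\<in>p. x [^] m = \<one> \<otimes> x [^] m \<oplus> t" using P.zero_closed by blast
    hence "\<exists>r\<in>carrier R. \<exists>t\<in>p. x [^] m = r \<otimes> x [^] m \<oplus> t" using one_closed by blast
    thus ?thesis unfolding amem by blast
  qed
  then obtain h where h: "h \<in> F" "\<forall>z\<in>h. x [^] m \<otimes> z \<in> a (Suc m)"
    using m[rule_format, OF le_SucI[OF order_refl] \<open>x [^] m \<in> a m\<close>] by blast
  obtain z where z: "z \<in> h" "z \<notin> q" using gf_avoid[OF gf h(1) q] by blast
  have "ideal h R" using gf h(1) by (rule gf_ideal)
  hence zc: "z \<in> carrier R" using z(1) by (rule ideal.Icarr)
  obtain r t where rt: "r \<in> carrier R" "t \<in> p" "x [^] m \<otimes> z = r \<otimes> x [^] Suc m \<oplus> t"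
  proof -
    have "x [^] m \<otimes> z \<in> a (Suc m)" using h(2) z(1) by blast
    thus ?thesis unfolding amem using that by blast
  qed
  have tc: "t \<in> carrier R" using rt P.Icarr by blast
  have Xc: "x [^] m \<in> carrier R" using xc by simp
  have eq: "x [^] m \<otimes> z = r \<otimes> (x [^] m \<otimes> x) \<oplus> t" using rt by simp
  have "x [^] m \<otimes> (z \<ominus> r \<otimes> x) = x [^] m \<otimes> z \<ominus> r \<otimes> (x [^] m \<otimes> x)"
    using Xc xc zc rt(1) by algebra
  also have "\<dots> = (r \<otimes> (x [^] m \<otimes> x) \<oplus> t) \<ominus> r \<otimes> (x [^] m \<otimes> x)" by (simp only: eq)
  also have "\<dots> = t" using Xc xc tc rt(1) by algebra
  finally have "x [^] m \<otimes> (z \<ominus> r \<otimes> x) = t" .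
  hence "x [^] m \<in> p \<or> z \<ominus> r \<otimes> x \<in> p"
    using P.I_prime xc zc rt(1) rt(2) by simp
  moreover have "x [^] m \<notin> p"
  proof
    assume "x [^] m \<in> p"
    show False
    proof (cases "m = 0")
      case True then show False using \<open>x [^] m \<in> p\<close> P.I_notcarr P.one_imp_carrier by simp
    next
      case False then show False using prime_pow[OF p(1) xc \<open>x [^] m \<in> p\<close>] x by simp
    qed
  qed
  ultimately have "z \<ominus> r \<otimes> x \<in> q" using sub by blast
  moreover have "r \<otimes> x \<in> q" using Q.I_l_closed x rt by blast
  ultimately have "(z \<ominus> r \<otimes> x) \<oplus> r \<otimes> x \<in> q" using Q.a_closed by blast
  moreover have "(z \<ominus> r \<otimes> x) \<oplus> r \<otimes> x = z" using zc rt(1) xc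
    by algebra
  ultimately show False using z by simp
qed

lemma main_aux:
  fixes R (structure) and F :: "'a set set"
  assumes "cring R"
    and "gabriel_filter R F"
    and "sigma_artinian R F"
  shows "finite (K_sigma R F)"
proof (rule ccontr)
  assume "infinite (K_sigma R F)"
  then obtain f :: "nat \<Rightarrow> 'a set" where f: "inj f" "range f \<subseteq> K_sigma R F"
    using infinite_countable_subset[OF \<open>infinite (K_sigma R F)\<close>] by (elim exE conjE)
  interpret cring R by fact
  have fK: "f i \<in> K_sigma R F" for i using f(2) by (rule range_subsetD)
  have fp: "primeideal (f i) R" "f i \<notin> F" for i using fK[of i] unfolding K_sigma_def by simp_all
  have fid: "ideal (f i) R" for i by (rule primeideal.axioms(1)[OF fp(1)])
  define a where "a n = \<Inter> (insert (carrier R) (f ` {..<n}))" for n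
  have aid: "ideal (a n) R" for n
    unfolding a_def by (rule i_Intersect) (auto intro: oneideal fid)
  have adec: "a (Suc n) \<subseteq> a n" for n unfolding a_def by auto
  obtain m where m: "\<forall>s\<ge>m. \<forall>y\<in>a m. \<exists>h\<in>F. \<forall>z\<in>h. y \<otimes> z \<in> a s"
    using mp[OF spec[OF assms(3)[unfolded sigma_artinian_def], of a] conjI[OF allI[OF aid] allI[OF adec]]] by (elim exE)
  have sub: "a m \<subseteq> f m"
  proof
    fix y assume y: "y \<in> a m"
    then obtain h where h: "h \<in> F" "\<forall>z\<in>h. y \<otimes> z \<in> a (Suc m)" using m[rule_format, OF le_SucI[OF order_refl] y] by blast
    obtain z where z: "z \<in> h" "z \<notin> f m" using gf_avoid[OF assms(2) h(1) fp] by blast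
    have "ideal h R" using assms(2) h(1) by (rule gf_ideal)
    hence zc: "z \<in> carrier R" using z(1) by (rule ideal.Icarr)
    have yc: "y \<in> carrier R" using y unfolding a_def by auto
    have "y \<otimes> z \<in> f m" using h z unfolding a_def by auto
    thus "y \<in> f m" using primeideal.I_prime[OF fp(1) yc zc] z by blast
  qed
  have nsub: "\<not> f i \<subseteq> f m" if "i < m" for i
  proof
    assume "f i \<subseteq> f m"
    hence "f i = f m" using incomparable[OF assms fp fp] by blast
    hence "i = m" by (rule injD[OF f(1)])
    thus False using that by simp
  qed
  have "n \<le> m \<Longrightarrow> \<exists>y\<in>a n. y \<notin> f m" for n
  proof (induction n)
    case 0
    have "\<one> \<notin> f m"
    proof
      assume "\<one> \<in> f m"
      hence "f m = carrier R" by (rule ideal.one_imp_carrier[OF fid])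
      thus False using primeideal.I_notcarr[OF fp(1)[of m]] by simp
    qed
    thus ?case unfolding a_def by auto
  next
    case (Suc n)
    then obtain y where y: "y \<in> a n" "y \<notin> f m" by auto
    obtain w where w: "w \<in> f n" "w \<notin> f m" using nsub[of n] Suc.prems by auto
    have wc: "w \<in> carrier R" using w(1) by (rule ideal.Icarr[OF fid])
    have yc: "y \<in> carrier R" using y unfolding a_def by auto
    have "y \<otimes> w \<notin> f m" using primeideal.I_prime[OF fp(1) yc wc] y w by blast
    moreover have "y \<otimes> w \<in> a (Suc n)"
    proof -
      have "y \<otimes> w \<in> f i" if "i < Suc n" for i
      proof (cases "i = n")
        case True then show ?thesis using ideal.I_l_closed[OF fid w(1) yc] by simp
      next
        case False
        hence "y \<in> f i" using y that unfolding a_def by auto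
        then show ?thesis using ideal.I_r_closed[OF fid _ wc] by simp
      qed
      thus ?thesis unfolding a_def using yc wc by auto
    qed
    ultimately show ?case by blast
  qed
  thus False using sub by blast
qed

theorem mainTheorem16:
  fixes R :: "('a, 'b) ring_scheme" and F :: "'a set set"
  assumes "cring R"
    and "gabriel_filter R F"
    and "sigma_artinian R F"
  shows "finite (K_sigma R F)"
  using main_aux assms by blast

end
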